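(* For every instance such that $|S_2|=2$ and $\pi_1+\pi_3+\pi_4-1=0$, we have $H^{PW''}\le \tfrac{100}{53}H^*$.
   Context: An instance consists of an integer $n\ge 1$ and growth rates $1=h(1)\ge h(2)\ge\cdots\ge h(n)>0$ of bamboos $b_1,\dots,b_n$. Bamboo Garden Trimming (discrete version): - All heights are $0$ initially. - On each day $t=1,2,\dots$ every bamboo $b_j$ grows by $h(j)$. - At the end of each day the gardener cuts exactly one bamboo $\sigma(t)\in\{1,\dots,n\}$ back to height $0$. The height of a schedule $\sigma:\mathbb{N}\to\{1,\dots,n\}$ is the supremum, over all days $t$ and all $j$, of the height of $b_j$ at the end of day $t$ just before the cut. $H^*$ denotes the infimum of this height over all schedules. Value of algorithm PW'': - Split $\{1,\dots,n\}$ into four sets: - $S_1=\{j: \tfrac23<h(j)\le 1\}$; - $S_2=\{j:\tfrac12<h(j)\le\tfrac23\}$; - $S_3=\{j: h(j)\le\tfrac12 \text{ and } \tfrac23 2^{-k}<h(j)\le 2^{-k}\text{ for some integer }k\ge1\}$; - $S_4=\{j: h(j)\le\tfrac12\text{ and } 2^{-(k+1)}<h(j)\le \tfrac23 2^{-k}\text{ for some integer }k\ge 1\}$. - Modified growths: $h''(j)=2^{-k}$ for $j\in S_3$ and $h''(j)=\tfrac23 2^{-k}$ for $j\in S_4$, with $k$ as in the definition of the set. - Let $\pi_1=|S_1|$, $sh_3=\sum_{j\in S_3}h''(j)$, $sh_4=\sum_{j\in S_4}h''(j)$, $\pi_3=\lfloor sh_3\rfloor$, $\pi_4=\lfloor sh_4\rfloor$,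 $f_3=sh_3-\pi_3$, $f_4=sh_4-\pi_4$. - Option (a): $\pi_R(a)=\lceil f_3+f_4\rceil$ and $z(a)=\pi_1+|S_2|+\pi_3+\pi_4+\pi_R(a)$. - Option (b): if $S_2=\emptyset$ put $z(b)=+\infty$. Otherwise let $h^*=\max_{j\in S_2}h(j)$ and $f_2=\tfrac12$ if $|S_2|$ is odd, $f_2=0$ if $|S_2|$ is even. Then $\pi_R(b)=\lceil f_2+f_3+f_4\rceil$ and $z(b)=2h^*\,(\pi_1+\lfloor |S_2|/2\rfloor+\pi_3+\pi_4+\pi_R(b))$. - The value returned by algorithm PW'' is $H^{PW''}=\min\{z(a),z(b)\}$. The paper takes this as the maximum height of the periodic pinwheel trimming schedule that it builds from these partitions. *)

theory Defs
  imports Complex_Main "HOL-Library.Extended_Real"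
begin

text \<open>Bamboos are indexed by 1..n; h j is the growth rate of bamboo j.\<close>

definition bgt_instance :: "nat \<Rightarrow> (nat \<Rightarrow> real) \<Rightarrow> bool" where
  "bgt_instance n h \<longleftrightarrow> n \<ge> 1 \<and> h 1 = 1 \<and>
     (\<forall>i j. 1 \<le> i \<longrightarrow> i \<le> j \<longrightarrow> j \<le> n \<longrightarrow> h j \<le> h i) \<and> h n > 0"

text \<open>A schedule cuts bamboo sigma t at the end of day t (t = 1, 2, ...).\<close>

definition schedules :: "nat \<Rightarrow> (nat \<Rightarrow> nat) set" where
  "schedules n = {\<sigma>. \<forall>t\<ge>1. \<sigma> t \<in> {1..n}}"

definition last_cut :: "(nat \<Rightarrow> nat) \<Rightarrow> nat \<Rightarrow> nat \<Rightarrow> nat" where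
  "last_cut \<sigma> j t = Max (insert 0 {s. 1 \<le> s \<and> s < t \<and> \<sigma> s = j})"

text \<open>Height of bamboo j at the end of day t, just before the cut.\<close>

definition height_before_cut :: "(nat \<Rightarrow> real) \<Rightarrow> (nat \<Rightarrow> nat) \<Rightarrow> nat \<Rightarrow> nat \<Rightarrow> real" where
  "height_before_cut h \<sigma> j t = h j * real (t - last_cut \<sigma> j t)"

definition sched_height :: "nat \<Rightarrow> (nat \<Rightarrow> real) \<Rightarrow> (nat \<Rightarrow> nat) \<Rightarrow> ereal" where
  "sched_height n h \<sigma> = (SUP t\<in>{1..}. SUP j\<in>{1..n}. ereal (height_before_cut h \<sigma> j t))"

definition Hstar :: "nat \<Rightarrow> (nat \<Rightarrow> real) \<Rightarrow> ereal" where
  "Hstar n h = (INF \<sigma>\<in>schedules n. sched_height n h \<sigma>)"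

definition S1 :: "nat \<Rightarrow> (nat \<Rightarrow> real) \<Rightarrow> nat set" where
  "S1 n h = {j\<in>{1..n}. 2/3 < h j \<and> h j \<le> 1}"

definition S2 :: "nat \<Rightarrow> (nat \<Rightarrow> real) \<Rightarrow> nat set" where
  "S2 n h = {j\<in>{1..n}. 1/2 < h j \<and> h j \<le> 2/3}"

definition S3 :: "nat \<Rightarrow> (nat \<Rightarrow> real) \<Rightarrow> nat set" where
  "S3 n h = {j\<in>{1..n}. h j \<le> 1/2 \<and>
     (\<exists>k::nat. k \<ge> 1 \<and> 2/3 * (1/2)^k < h j \<and> h j \<le> (1/2)^k)}"

definition S4 :: "nat \<Rightarrow> (nat \<Rightarrow> real) \<Rightarrow> nat set" where
  "S4 n h = {j\<in>{1..n}. h j \<le> 1/2 \<and>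
     (\<exists>k::nat. k \<ge> 1 \<and> (1/2)^(k+1) < h j \<and> h j \<le> 2/3 * (1/2)^k)}"

text \<open>Modified growth rates; k is the (unique) integer from the set definitions.\<close>

definition h3'' :: "real \<Rightarrow> real" where
  "h3'' x = (1/2) ^ (THE k::nat. k \<ge> 1 \<and> 2/3 * (1/2)^k < x \<and> x \<le> (1/2)^k)"

definition h4'' :: "real \<Rightarrow> real" where
  "h4'' x = 2/3 * (1/2) ^ (THE k::nat. k \<ge> 1 \<and> (1/2)^(k+1) < x \<and> x \<le> 2/3 * (1/2)^k)"

definition sh3 :: "nat \<Rightarrow> (nat \<Rightarrow> real) \<Rightarrow> real" where
  "sh3 n h = (\<Sum>j\<in>S3 n h. h3'' (h j))"

definition sh4 :: "nat \<Rightarrow> (nat \<Rightarrow> real) \<Rightarrow> real" where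
  "sh4 n h = (\<Sum>j\<in>S4 n h. h4'' (h j))"

definition pi1 :: "nat \<Rightarrow> (nat \<Rightarrow> real) \<Rightarrow> int" where
  "pi1 n h = int (card (S1 n h))"

definition pi3 :: "nat \<Rightarrow> (nat \<Rightarrow> real) \<Rightarrow> int" where
  "pi3 n h = \<lfloor>sh3 n h\<rfloor>"

definition pi4 :: "nat \<Rightarrow> (nat \<Rightarrow> real) \<Rightarrow> int" where
  "pi4 n h = \<lfloor>sh4 n h\<rfloor>"

definition f3 :: "nat \<Rightarrow> (nat \<Rightarrow> real) \<Rightarrow> real" where
  "f3 n h = sh3 n h - of_int (pi3 n h)"

definition f4 :: "nat \<Rightarrow> (nat \<Rightarrow> real) \<Rightarrow> real" where
  "f4 n h = sh4 n h - of_int (pi4 n h)"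

definition z_a :: "nat \<Rightarrow> (nat \<Rightarrow> real) \<Rightarrow> real" where
  "z_a n h = of_int (pi1 n h + int (card (S2 n h)) + pi3 n h + pi4 n h
                     + \<lceil>f3 n h + f4 n h\<rceil>)"

definition z_b :: "nat \<Rightarrow> (nat \<Rightarrow> real) \<Rightarrow> ereal" where
  "z_b n h =
    (if S2 n h = {} then \<infinity>
     else (let hs = Max (h ` S2 n h);
               f2 = (if odd (card (S2 n h)) then 1/2 else 0 :: real)
           in ereal (2 * hs * of_int (pi1 n h + int (card (S2 n h) div 2) + pi3 n h + pi4 n h
                                       + \<lceil>f2 + f3 n h + f4 n h\<rceil>))))"

definition H_PW :: "nat \<Rightarrow> (nat \<Rightarrow> real) \<Rightarrow> ereal" where
  "H_PW n h = min (ereal (z_a n h)) (z_b n h)"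

end

theory Submission imports Defs begin

lemma block_cut:
  assumes bound: "\<forall>t\<ge>1. \<forall>j\<in>{1..n}. height_before_cut h \<sigma> j t \<le> H"
    and j: "j \<in> {1..n}" and hj: "h j > 0" and d: "H < h j * real (d+1)"
  shows "\<exists>s\<in>{a+1..a+d}. \<sigma> s = j"
proof (rule ccontr)
  assume no: "\<not> ?thesis"
  let ?t = "a+d+1"
  have fin: "finite {s. 1 \<le> s \<and> s < ?t \<and> \<sigma> s = j}"
    by (rule finite_subset[of _ "{..<?t}"]) auto
  have "\<forall>s\<in>{s. 1 \<le> s \<and> s < ?t \<and> \<sigma> s = j}. s \<le> a"
  proof
    fix s assume "s \<in> {s. 1 \<le> s \<and> s < ?t \<and> \<sigma> s = j}"
    then show "s \<le> a" using no by (cases "s \<le> a") auto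
  qed
  then have "last_cut \<sigma> j ?t \<le> a" unfolding last_cut_def
    using fin by (subst Max_le_iff) auto
  then have "real (d+1) \<le> real (?t - last_cut \<sigma> j ?t)" by simp
  then have "h j * real (d+1) \<le> height_before_cut h \<sigma> j ?t"
    unfolding height_before_cut_def using hj by (intro mult_left_mono) auto
  moreover have "height_before_cut h \<sigma> j ?t \<le> H" using bound j by auto
  ultimately show False using d by linarith
qed

lemma count_blocks:
  assumes "\<forall>a. \<exists>s\<in>{a+1..a+d}. \<sigma> s = j"
  shows "q \<le> card {s\<in>{1..q*d}. \<sigma> s = j}"
proof (induction q)
  case 0 then show ?case by simp
next
  case (Suc q)
  obtain s0 where s0: "s0 \<in> {q*d+1..q*d+d}" "\<sigma> s0 = j" using assms by blast
  have sub: "insert s0 {s\<in>{1..q*d}. \<sigma> s = j} \<subseteq> {s\<in>{1..Suc q*d}. \<sigma> s = j}"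
    using s0 by auto
  have "s0 \<notin> {s\<in>{1..q*d}. \<sigma> s = j}" using s0 by auto
  then have "card (insert s0 {s\<in>{1..q*d}. \<sigma> s = j}) = Suc (card {s\<in>{1..q*d}. \<sigma> s = j})"
    by simp
  moreover have "card (insert s0 {s\<in>{1..q*d}. \<sigma> s = j}) \<le> card {s\<in>{1..Suc q*d}. \<sigma> s = j}"
    by (rule card_mono[OF _ sub]) simp
  ultimately show ?case using Suc.IH by simp
qed

lemma count_div:
  assumes "\<forall>a. \<exists>s\<in>{a+1..a+d}. \<sigma> s = j"
  shows "W div d \<le> card {s\<in>{1..W}. \<sigma> s = j}"
proof -
  have "W div d \<le> card {s\<in>{1..(W div d)*d}. \<sigma> s = j}" by (rule count_blocks[OF assms])
  also have "\<dots> \<le> card {s\<in>{1..W}. \<sigma> s = j}"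
  proof (rule card_mono)
    have "(W div d)*d \<le> W" by (simp add: div_times_less_eq_dividend)
    show "{s\<in>{1..(W div d)*d}. \<sigma> s = j} \<subseteq> {s\<in>{1..W}. \<sigma> s = j}"
    proof
      fix x assume "x \<in> {s\<in>{1..(W div d)*d}. \<sigma> s = j}"
      then show "x \<in> {s\<in>{1..W}. \<sigma> s = j}" using \<open>(W div d)*d \<le> W\<close> by (auto intro: le_trans[OF _ \<open>(W div d)*d \<le> W\<close>])
    qed
  qed simp
  finally show ?thesis .
qed

lemma real_div_ge: "d > 0 \<Longrightarrow> real W / real d - 1 \<le> real (W div d)"
proof -
  assume d: "d > 0"
  have "W = (W div d) * d + W mod d" by simp
  then have "real W = real (W div d) * real d + real (W mod d)" by (metis of_nat_add of_nat_mult)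
  moreover have "real (W mod d) < real d" using d by simp
  ultimately have "real W < (real (W div d) + 1) * real d" by (simp add: algebra_simps)
  then show ?thesis using d by (simp add: field_simps)
qed

lemma density:
  assumes \<sigma>: "\<sigma> \<in> schedules n" and n: "n \<ge> 1"
    and bound: "\<forall>t\<ge>1. \<forall>j\<in>{1..n}. height_before_cut h \<sigma> j t \<le> H"
    and pos: "\<forall>j\<in>{1..n}. h j > 0"
  shows "(\<Sum>j\<in>{1..n}. h j) \<le> H"
proof (rule ccontr)
  define S where "S = (\<Sum>j\<in>{1..n}. h j)"
  assume "\<not> (\<Sum>j\<in>{1..n}. h j) \<le> H"
  then have HS: "H < S" unfolding S_def by simp
  have hH: "h j \<le> H" if "j \<in> {1..n}" for j
  proof -
    have "{s. 1 \<le> s \<and> s < (1::nat) \<and> \<sigma> s = j} = {}" by auto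
    then have "last_cut \<sigma> j 1 = 0" unfolding last_cut_def by (simp only:) simp
    then have "height_before_cut h \<sigma> j 1 = h j" unfolding height_before_cut_def by simp
    then show ?thesis using bound that by fastforce
  qed
  have Hpos: "H > 0" using hH[of 1] pos n by force
  define d where "d j = nat \<lfloor>H / h j\<rfloor>" for j
  have d1: "d j \<ge> 1" and dle: "real (d j) \<le> H / h j" and dgt: "H < h j * real (d j + 1)"
    if j: "j \<in> {1..n}" for j
  proof -
    have hj: "h j > 0" using pos j by auto
    have "1 \<le> H / h j" using hH[OF j] hj by simp
    then show "d j \<ge> 1" unfolding d_def by linarith
    show "real (d j) \<le> H / h j" unfolding d_def using \<open>1 \<le> H / h j\<close> by linarith
    have "H / h j < real (d j + 1)" unfolding d_def using \<open>1 \<le> H / h j\<close> by linarith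
    then show "H < h j * real (d j + 1)" using hj by (simp add: field_simps)
  qed
  obtain W :: nat where W: "real n * H / (S - H) < real W" using reals_Archimedean2 by blast
  have cnt: "W div d j \<le> card {s\<in>{1..W}. \<sigma> s = j}" if j: "j \<in> {1..n}" for j
    apply (rule count_div)
    using block_cut[OF bound j _ dgt[OF j]] pos j by auto
  have disj: "card (\<Union>j\<in>{1..n}. {s\<in>{1..W}. \<sigma> s = j}) = (\<Sum>j\<in>{1..n}. card {s\<in>{1..W}. \<sigma> s = j})"
    by (rule card_UN_disjoint) auto
  have "card (\<Union>j\<in>{1..n}. {s\<in>{1..W}. \<sigma> s = j}) \<le> card {1..W}"
    by (rule card_mono) auto
  then have "(\<Sum>j\<in>{1..n}. W div d j) \<le> W"
    using disj sum_mono[of "{1..n}" "\<lambda>j. W div d j" "\<lambda>j. card {s\<in>{1..W}. \<sigma> s = j}"] cnt by simp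
  then have A: "(\<Sum>j\<in>{1..n}. real (W div d j)) \<le> real W"
    by (metis of_nat_le_iff of_nat_sum)
  have B: "real W * h j / H - 1 \<le> real (W div d j)" if j: "j \<in> {1..n}" for j
  proof -
    have hj: "h j > 0" using pos j by auto
    have "real W * h j / H = real W / (H / h j)" using hj by simp
    also have "\<dots> \<le> real W / real (d j)"
      using d1[OF j] dle[OF j] hj Hpos by (intro divide_left_mono) auto
    finally show ?thesis using real_div_ge[of "d j" W] d1[OF j] by simp
  qed
  have "(\<Sum>j\<in>{1..n}. real W * h j / H - 1) \<le> real W"
  proof -
    have "(\<Sum>j\<in>{1..n}. real W * h j / H - 1) \<le> (\<Sum>j\<in>{1..n}. real (W div d j))"
      by (rule sum_mono) (rule B)
    then show ?thesis using A by linarith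
  qed
  then have "real W * S / H - real n \<le> real W"
    unfolding S_def by (simp add: sum_subtractf sum_divide_distrib[symmetric] sum_distrib_left)
  then have "real W * S - real n * H \<le> real W * H" using Hpos by (simp add: field_simps)
  moreover have "real n * H < real W * (S - H)" using W HS by (simp add: field_simps)
  ultimately show False by (simp add: algebra_simps)
qed


lemma sched_ge:
  assumes \<sigma>: "\<sigma> \<in> schedules n" and n: "n \<ge> 1" and pos: "\<forall>j\<in>{1..n}. h j > 0"
  shows "ereal (\<Sum>j\<in>{1..n}. h j) \<le> sched_height n h \<sigma>"
proof (rule ccontr)
  assume "\<not> ?thesis"
  then have "sched_height n h \<sigma> < ereal (\<Sum>j\<in>{1..n}. h j)" by simp
  then obtain r where r1: "sched_height n h \<sigma> < ereal r" and r2: "ereal r < ereal (\<Sum>j\<in>{1..n}. h j)"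
    using ereal_dense2 by blast
  have "\<forall>t\<ge>1. \<forall>j\<in>{1..n}. height_before_cut h \<sigma> j t \<le> r"
  proof (intro allI impI ballI)
    fix t :: nat and j assume t: "1 \<le> t" and j: "j \<in> {1..n}"
    have "ereal (height_before_cut h \<sigma> j t) \<le> (SUP j\<in>{1..n}. ereal (height_before_cut h \<sigma> j t))"
      using j by (rule SUP_upper)
    also have "\<dots> \<le> sched_height n h \<sigma>" unfolding sched_height_def
      using t by (intro SUP_upper) auto
    finally have "ereal (height_before_cut h \<sigma> j t) < ereal r" using r1 by (rule le_less_trans)
    then show "height_before_cut h \<sigma> j t \<le> r" by simp
  qed
  from density[OF \<sigma> n this pos] r2 show False by simp
qed

lemma Hstar_ge:
  assumes n: "n \<ge> 1" and pos: "\<forall>j\<in>{1..n}. h j > 0"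
  shows "ereal (\<Sum>j\<in>{1..n}. h j) \<le> Hstar n h"
  unfolding Hstar_def by (rule INF_greatest) (rule sched_ge[OF _ n pos])

lemma pow_half_le: "k1 < (k2::nat) \<Longrightarrow> (1/2::real)^k2 \<le> (1/2)^k1 / 2"
proof -
  assume "k1 < k2"
  then have "(1/2::real)^k2 \<le> (1/2)^(Suc k1)" by (intro power_decreasing) auto
  then show ?thesis by simp
qed

lemma h3''_eq:
  assumes "k \<ge> 1" "2/3 * (1/2)^k < x" "x \<le> (1/2::real)^k"
  shows "h3'' x = (1/2)^k"
proof -
  have "(THE k::nat. k \<ge> 1 \<and> 2/3 * (1/2)^k < x \<and> x \<le> (1/2)^k) = k"
  proof (rule the_equality)
    show "k \<ge> 1 \<and> 2/3 * (1/2)^k < x \<and> x \<le> (1/2)^k" using assms by auto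
  next
    fix k' assume k': "k' \<ge> 1 \<and> 2/3 * (1/2)^k' < x \<and> x \<le> (1/2::real)^k'"
    show "k' = k"
    proof (rule ccontr)
      assume "k' \<noteq> k"
      then consider "k' < k" | "k < k'" by linarith
      then show False
      proof cases
        case 1 from pow_half_le[OF 1] k' assms show False by simp
      next
        case 2 from pow_half_le[OF 2] k' assms show False by simp
      qed
    qed
  qed
  then show ?thesis unfolding h3''_def by simp
qed

lemma h4''_eq:
  assumes "k \<ge> 1" "(1/2)^(k+1) < x" "x \<le> 2/3 * (1/2::real)^k"
  shows "h4'' x = 2/3 * (1/2)^k"
proof -
  have "(THE k::nat. k \<ge> 1 \<and> (1/2)^(k+1) < x \<and> x \<le> 2/3 * (1/2)^k) = k"
  proof (rule the_equality)
    show "k \<ge> 1 \<and> (1/2)^(k+1) < x \<and> x \<le> 2/3 * (1/2)^k" using assms by auto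
  next
    fix k' assume k': "k' \<ge> 1 \<and> (1/2)^(k'+1) < x \<and> x \<le> 2/3 * (1/2::real)^k'"
    show "k' = k"
    proof (rule ccontr)
      assume "k' \<noteq> k"
      then consider "k' < k" | "k < k'" by linarith
      then show False
      proof cases
        case 1 from pow_half_le[OF 1] k' assms show False by simp
      next
        case 2 from pow_half_le[OF 2] k' assms show False by simp
      qed
    qed
  qed
  then show ?thesis unfolding h4''_def by simp
qed

lemma S3_bound: "j \<in> S3 n h \<Longrightarrow> 2/3 * h3'' (h j) \<le> h j \<and> 0 \<le> h3'' (h j)"
  unfolding S3_def using h3''_eq by fastforce

lemma S4_bound: "j \<in> S4 n h \<Longrightarrow> 2/3 * h4'' (h j) \<le> h j \<and> 0 \<le> h4'' (h j)"
proof -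
  assume "j \<in> S4 n h"
  then obtain k where k: "k \<ge> 1" "(1/2)^(k+1) < h j" "h j \<le> 2/3 * (1/2::real)^k"
    unfolding S4_def by auto
  have e: "h4'' (h j) = 2/3 * (1/2)^k" by (rule h4''_eq[OF k])
  have "(1/2::real)^(k+1) = (1/2)^k / 2" by simp
  with k e show ?thesis by auto
qed

lemma S34_disj: "S3 n h \<inter> S4 n h = {}"
proof (rule ccontr)
  assume "S3 n h \<inter> S4 n h \<noteq> {}"
  then obtain j where "j \<in> S3 n h" "j \<in> S4 n h" by blast
  then obtain k k' where k: "k \<ge> 1" "2/3 * (1/2)^k < h j" "h j \<le> (1/2::real)^k"
    and k': "k' \<ge> 1" "(1/2)^(k'+1) < h j" "h j \<le> 2/3 * (1/2::real)^k'"
    unfolding S3_def S4_def by auto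
  consider "k \<le> k'" | "k' < k" by linarith
  then show False
  proof cases
    case 1
    then have "(1/2::real)^k' \<le> (1/2)^k" by (intro power_decreasing) auto
    with k k' show False by simp
  next
    case 2
    then have "(1/2::real)^k \<le> (1/2)^(k'+1)" by (intro power_decreasing) auto
    with k k' show False by simp
  qed
qed


theorem proposition6:
  fixes n :: nat and h :: "nat \<Rightarrow> real"
  assumes "bgt_instance n h"
    and "card (S2 n h) = 2"
    and "pi1 n h + pi3 n h + pi4 n h - 1 = 0"
  shows "H_PW n h \<le> ereal (100/53) * Hstar n h"
proof -
  have n: "n \<ge> 1" and h1: "h 1 = 1" and mono: "\<And>i j. 1 \<le> i \<Longrightarrow> i \<le> j \<Longrightarrow> j \<le> n \<Longrightarrow> h j \<le> h i"
    and hn: "h n > 0" using assms(1) unfolding bgt_instance_def by auto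
  have pos: "\<forall>j\<in>{1..n}. h j > 0" using mono hn by (meson atLeastAtMost_iff order.refl less_le_trans)
  define S where "S = (\<Sum>j\<in>{1..n}. h j)"
  have HS: "ereal S \<le> Hstar n h" unfolding S_def by (rule Hstar_ge[OF n pos])
  have fin: "finite (S1 n h)" "finite (S2 n h)" "finite (S3 n h)" "finite (S4 n h)"
    unfolding S1_def S2_def S3_def S4_def by auto
  have oneS1: "1 \<in> S1 n h" unfolding S1_def using n h1 by auto
  then have "card (S1 n h) \<ge> 1" using fin(1) by (metis card_0_eq empty_iff less_one not_le)
  then have p1: "pi1 n h \<ge> 1" unfolding pi1_def by simp
  have sh3: "sh3 n h \<ge> 0" unfolding sh3_def using S3_bound by (intro sum_nonneg) auto
  have sh4: "sh4 n h \<ge> 0" unfolding sh4_def using S4_bound by (intro sum_nonneg) auto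
  have "pi3 n h \<ge> 0" "pi4 n h \<ge> 0" unfolding pi3_def pi4_def using sh3 sh4 by auto
  then have p3: "pi3 n h = 0" and p4: "pi4 n h = 0" using p1 assms(3) by auto
  have s3: "sh3 n h < 1" using p3 unfolding pi3_def by linarith
  have s4: "sh4 n h < 1" using p4 unfolding pi4_def by linarith
  have f3: "f3 n h = sh3 n h" and f4: "f4 n h = sh4 n h" unfolding f3_def f4_def using p3 p4 by auto
  have c1: "card (S1 n h) = 1" using p1 p3 p4 assms(3) unfolding pi1_def by simp
  obtain j1 j2 where S2e: "S2 n h = {j1, j2}" and j12: "j1 \<noteq> j2"
    using assms(2) by (meson card_2_iff)
  have hj1: "1/2 < h j1" "h j1 \<le> 2/3" and hj2: "1/2 < h j2" "h j2 \<le> 2/3"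
    using S2e unfolding S2_def by blast+
  define b where "b = Max (h ` S2 n h)"
  have b: "b = max (h j1) (h j2)" unfolding b_def S2e by simp
  define s where "s = sh3 n h + sh4 n h"
  have zb: "z_b n h = ereal (2 * b * of_int (2 + \<lceil>s\<rceil>))"
    unfolding z_b_def b_def[symmetric] s_def using S2e assms(2) p1 p3 p4 c1 f3 f4
    by (simp add: pi1_def Let_def)
  have sumS2: "(\<Sum>j\<in>S2 n h. h j) = h j1 + h j2" using S2e j12 by simp
  have sumS3: "(\<Sum>j\<in>S3 n h. h j) \<ge> 2/3 * sh3 n h"
    unfolding sh3_def sum_distrib_left using S3_bound by (intro sum_mono) auto
  have sumS4: "(\<Sum>j\<in>S4 n h. h j) \<ge> 2/3 * sh4 n h"
    unfolding sh4_def sum_distrib_left using S4_bound by (intro sum_mono) auto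
  have sumS1: "(\<Sum>j\<in>S1 n h. h j) \<ge> 1"
  proof -
    have "(\<Sum>j\<in>S1 n h. h j) = h 1 + (\<Sum>j\<in>S1 n h - {1}. h j)"
      using oneS1 fin(1) by (simp add: sum.remove)
    moreover have "(\<Sum>j\<in>S1 n h - {1}. h j) \<ge> 0" unfolding S1_def using pos by (intro sum_nonneg) auto
    ultimately show ?thesis using h1 by simp
  qed
  have d12: "S1 n h \<inter> S2 n h = {}" unfolding S1_def S2_def by auto
  have d123: "(S1 n h \<union> S2 n h) \<inter> S3 n h = {}" unfolding S1_def S2_def S3_def by auto
  have d1234: "(S1 n h \<union> S2 n h \<union> S3 n h) \<inter> S4 n h = {}"
    using S34_disj unfolding S1_def S2_def S4_def by auto
  have "(\<Sum>j\<in>S1 n h \<union> S2 n h \<union> S3 n h \<union> S4 n h. h j)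
      = (\<Sum>j\<in>S1 n h. h j) + (\<Sum>j\<in>S2 n h. h j) + (\<Sum>j\<in>S3 n h. h j) + (\<Sum>j\<in>S4 n h. h j)"
    using fin d12 d123 d1234 by (simp add: sum.union_disjoint)
  moreover have "(\<Sum>j\<in>S1 n h \<union> S2 n h \<union> S3 n h \<union> S4 n h. h j) \<le> S"
    unfolding S_def using pos by (intro sum_mono2) (auto simp: S1_def S2_def S3_def S4_def less_imp_le)
  ultimately have Sge: "1 + h j1 + h j2 + 2/3 * s \<le> S"
    using sumS1 sumS2 sumS3 sumS4 unfolding s_def by (simp add: ring_distribs)
  have s0: "0 \<le> s" "s < 2" unfolding s_def using sh3 sh4 s3 s4 by auto
  have key: "2 * b * of_int (2 + \<lceil>s\<rceil>) \<le> 100/53 * S"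
  proof -
    have cs: "\<lceil>s\<rceil> = 0 \<or> \<lceil>s\<rceil> = 1 \<or> (\<lceil>s\<rceil> = 2 \<and> s > 1)"
    proof -
      have a: "of_int \<lceil>s\<rceil> - 1 < s" "s \<le> of_int \<lceil>s\<rceil>" using ceiling_correct[of s] by auto
      then have "\<lceil>s\<rceil> \<ge> 0" "\<lceil>s\<rceil> \<le> 2" using s0 by linarith+
      then have "\<lceil>s\<rceil> = 0 \<or> \<lceil>s\<rceil> = 1 \<or> \<lceil>s\<rceil> = 2" by linarith
      then show ?thesis using a by auto
    qed
    have bb: "1/2 < b" "b \<le> 2/3" "h j1 + h j2 \<ge> b + 1/2" using b hj1 hj2 by auto
    from cs show ?thesis
    proof (elim disjE conjE)
      assume "\<lceil>s\<rceil> = 0" then show ?thesis using Sge bb s0 by simp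
    next
      assume "\<lceil>s\<rceil> = 1" then show ?thesis using Sge bb s0 by simp
    next
      assume "\<lceil>s\<rceil> = 2" "s > 1" then show ?thesis using Sge bb s0 by simp
    qed
  qed
  have "H_PW n h \<le> z_b n h" unfolding H_PW_def by simp
  also have "\<dots> \<le> ereal (100/53 * S)" using zb key by simp
  also have "\<dots> = ereal (100/53) * ereal S" by simp
  also have "\<dots> \<le> ereal (100/53) * Hstar n h" using HS by (rule ereal_mult_left_mono) simp
  finally show ?thesis .
qed

end
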